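(* For the FCIQMC step $v_{t+1}=F(A,v_t)$ and $\xi_{t+1}=v_{t+1}-Av_t$, $$\mathbb{E}\bigl(\|\xi_{t+1}\|_2^2\mid\mathcal{F}_t\bigr)\le\Bigl(\max_{1\le k\le N}(\|a_k\|_0-2)\|a_{o,k}\|_2^2+\tfrac12\Bigr)\frac{\|v_t\|_1^2}{M_t},$$ where $a_k=A(:,k)$ is the $k$-th column of $A$, $a_{o,k}$ is the $k$-th column of $A_o$, and $M_t=\|v_t\|_1$.
   Context: Let $A\in\mathbb{R}^{N\times N}$ be real symmetric, with every diagonal entry nonzero and every column having at least 2 nonzero entries. Write $A=A_d+A_o$ with $A_d$ the diagonal part and $A_o$ the off-diagonal part; $\|x\|_0$ is the number of nonzero entries; $e_l$ the $l$-th standard basis vector. FCIQMC step: the current iterate $v_t\in\mathbb{Z}^N$ is represented by $M_t=\|v_t\|_1$ signed particles, $|v_t(k)|$ particles at location $k$ each with sign $\mathrm{sgn}(v_t(k))$ (so $v_t$ is the sum of $s_\alpha e_{l_\alpha}$ over particles $\alpha$ with location $l_\alpha$ and sign $s_\alpha$). For each particle $\alpha$ with location $k$ and sign $s$, independently of all other particles (conditionally on $\mathcal F_t$): (Spawning) choose $l$ uniformly at random among the $\|a_{o,k}\|_0$ indices $j$ with $A_o(j,k)\neq0$; let $Q=\|a_{o,k}\|_0|A(l,k)|$ and let $n=\lfloor Q\rfloor$ with probability $1-(Q-\lfloor Q\rfloor)$ and $n=\lfloor Q\rfloor+1$ with probability $Q-\lfloor Q\rfloor$; contribute $n\,\mathrm{sgn}(A(l,k)s)\,e_l$.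 (Diagonal cloning/death) independently, let $Q=|A(k,k)|$, $n$ chosen by the same rounding rule, and contribute $n\,\mathrm{sgn}(A(k,k)s)\,e_k$. (Annihilation) $v_{t+1}=F(A,v_t)$ is the sum of all contributions of all particles (particles of opposite sign at the same location cancel, so $v_{t+1}$ again has $\|v_{t+1}\|_1$ particles). $\mathcal{F}_t=\sigma(v_1,\dots,v_t)$. *)

theory Defs
  imports "HOL-Probability.Probability"
begin

text \<open>Indices are 0..N-1. A matrix is a function nat => nat => real (A i j = entry in row i,
column j); an integer vector is nat => int, only entries below N are relevant.\<close>

definition sgn_int :: "real \<Rightarrow> int" where
  "sgn_int x = (if x > 0 then 1 else if x < 0 then -1 else 0)"

definition round_pmf :: "real \<Rightarrow> int pmf" where
  "round_pmf Q = map_pmf (\<lambda>b. if b then \<lfloor>Q\<rfloor> + 1 else \<lfloor>Q\<rfloor>) (bernoulli_pmf (Q - of_int \<lfloor>Q\<rfloor>))"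

definition unit_vec :: "nat \<Rightarrow> int \<Rightarrow> nat \<Rightarrow> int" where
  "unit_vec l c = (\<lambda>i. if i = l then c else 0)"

definition offdiag_support :: "nat \<Rightarrow> (nat \<Rightarrow> nat \<Rightarrow> real) \<Rightarrow> nat \<Rightarrow> nat set" where
  "offdiag_support N A k = {j. j < N \<and> j \<noteq> k \<and> A j k \<noteq> 0}"

definition spawn_pmf :: "nat \<Rightarrow> (nat \<Rightarrow> nat \<Rightarrow> real) \<Rightarrow> nat \<Rightarrow> int \<Rightarrow> (nat \<Rightarrow> int) pmf" where
  "spawn_pmf N A k s =
     bind_pmf (pmf_of_set (offdiag_support N A k)) (\<lambda>l.
       map_pmf (\<lambda>n. unit_vec l (n * sgn_int (A l k * of_int s)))
         (round_pmf (real (card (offdiag_support N A k)) * \<bar>A l k\<bar>)))"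

definition diag_pmf :: "(nat \<Rightarrow> nat \<Rightarrow> real) \<Rightarrow> nat \<Rightarrow> int \<Rightarrow> (nat \<Rightarrow> int) pmf" where
  "diag_pmf A k s = map_pmf (\<lambda>n. unit_vec k (n * sgn_int (A k k * of_int s))) (round_pmf \<bar>A k k\<bar>)"

definition particle_pmf :: "nat \<Rightarrow> (nat \<Rightarrow> nat \<Rightarrow> real) \<Rightarrow> nat \<Rightarrow> int \<Rightarrow> (nat \<Rightarrow> int) pmf" where
  "particle_pmf N A k s =
     bind_pmf (spawn_pmf N A k s) (\<lambda>x. bind_pmf (diag_pmf A k s) (\<lambda>y. return_pmf (\<lambda>i. x i + y i)))"

fun sum_indep_pmf :: "(nat \<Rightarrow> int) pmf list \<Rightarrow> (nat \<Rightarrow> int) pmf" where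
  "sum_indep_pmf [] = return_pmf (\<lambda>_. 0)"
| "sum_indep_pmf (p # ps) = bind_pmf p (\<lambda>x. bind_pmf (sum_indep_pmf ps) (\<lambda>y. return_pmf (\<lambda>i. x i + y i)))"

definition particles :: "nat \<Rightarrow> (nat \<Rightarrow> int) \<Rightarrow> (nat \<times> int) list" where
  "particles N v = concat (map (\<lambda>k. replicate (nat \<bar>v k\<bar>) (k, sgn (v k))) [0..<N])"

text \<open>Law of v_{t+1} = F(A, v_t) given v_t = v (annihilation = summation).\<close>
definition fciqmc_step :: "nat \<Rightarrow> (nat \<Rightarrow> nat \<Rightarrow> real) \<Rightarrow> (nat \<Rightarrow> int) \<Rightarrow> (nat \<Rightarrow> int) pmf" where
  "fciqmc_step N A v = sum_indep_pmf (map (\<lambda>(k, s). particle_pmf N A k s) (particles N v))"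

definition l1_norm :: "nat \<Rightarrow> (nat \<Rightarrow> int) \<Rightarrow> real" where
  "l1_norm N v = (\<Sum>k<N. \<bar>real_of_int (v k)\<bar>)"

definition matvec :: "nat \<Rightarrow> (nat \<Rightarrow> nat \<Rightarrow> real) \<Rightarrow> (nat \<Rightarrow> int) \<Rightarrow> nat \<Rightarrow> real" where
  "matvec N A v = (\<lambda>i. \<Sum>j<N. A i j * real_of_int (v j))"

definition sq_l2_norm :: "nat \<Rightarrow> (nat \<Rightarrow> real) \<Rightarrow> real" where
  "sq_l2_norm N x = (\<Sum>i<N. (x i)^2)"

definition col_l0 :: "nat \<Rightarrow> (nat \<Rightarrow> nat \<Rightarrow> real) \<Rightarrow> nat \<Rightarrow> nat" where
  "col_l0 N A k = card {j. j < N \<and> A j k \<noteq> 0}"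

definition offdiag_col_sq_l2 :: "nat \<Rightarrow> (nat \<Rightarrow> nat \<Rightarrow> real) \<Rightarrow> nat \<Rightarrow> real" where
  "offdiag_col_sq_l2 N A k = (\<Sum>j\<in>{j. j < N \<and> j \<noteq> k}. (A j k)^2)"

end

theory Submission
  imports Defs
begin

lemma int_bind:
  fixes f :: "'b \<Rightarrow> real"
  assumes fin: "finite (set_pmf M)" and finN: "\<And>x. x \<in> set_pmf M \<Longrightarrow> finite (set_pmf (N x))"
  shows "measure_pmf.expectation (bind_pmf M N) f = measure_pmf.expectation M (\<lambda>x. measure_pmf.expectation (N x) f)"
proof -
  define B where "B = set_pmf (bind_pmf M N)"
  have B: "B = (\<Union>x\<in>set_pmf M. set_pmf (N x))" unfolding B_def by (simp add: set_bind_pmf)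
  have finB: "finite B" unfolding B by (rule finite_UN_I) (simp_all add: fin finN)
  have "measure_pmf.expectation (bind_pmf M N) f = (\<Sum>a\<in>B. f a * pmf (bind_pmf M N) a)"
    by (rule integral_measure_pmf_real) (use finB in \<open>auto simp: B_def simp del: set_bind_pmf\<close>)
  also have "\<dots> = (\<Sum>a\<in>B. f a * (\<Sum>x\<in>set_pmf M. pmf (N x) a * pmf M x))"
  proof (rule sum.cong[OF refl])
    fix a
    have "pmf (bind_pmf M N) a = (\<Sum>x\<in>set_pmf M. pmf (N x) a * pmf M x)"
      unfolding pmf_bind by (rule integral_measure_pmf_real) (auto simp: fin)
    then show "f a * pmf (bind_pmf M N) a = f a * (\<Sum>x\<in>set_pmf M. pmf (N x) a * pmf M x)" by simp
  qed
  also have "\<dots> = (\<Sum>x\<in>set_pmf M. (\<Sum>a\<in>B. f a * pmf (N x) a) * pmf M x)"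
    by (simp add: sum_distrib_left sum_distrib_right mult.assoc sum.swap[of _ B])
  also have "\<dots> = (\<Sum>x\<in>set_pmf M. measure_pmf.expectation (N x) f * pmf M x)"
  proof (rule sum.cong[OF refl])
    fix x assume x: "x \<in> set_pmf M"
    have "measure_pmf.expectation (N x) f = (\<Sum>a\<in>B. f a * pmf (N x) a)"
      by (rule integral_measure_pmf_real) (use x finB in \<open>auto simp: B\<close>)
    then show "(\<Sum>a\<in>B. f a * pmf (N x) a) * pmf M x = measure_pmf.expectation (N x) f * pmf M x" by simp
  qed
  also have "\<dots> = measure_pmf.expectation M (\<lambda>x. measure_pmf.expectation (N x) f)"
    by (rule integral_measure_pmf_real[symmetric]) (auto simp: fin)
  finally show ?thesis .
qed


definition addp :: "(nat \<Rightarrow> int) pmf \<Rightarrow> (nat \<Rightarrow> int) pmf \<Rightarrow> (nat \<Rightarrow> int) pmf" where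
  "addp p q = bind_pmf p (\<lambda>x. bind_pmf q (\<lambda>y. return_pmf (\<lambda>i. x i + y i)))"

definition meanv :: "(nat \<Rightarrow> int) pmf \<Rightarrow> nat \<Rightarrow> real" where
  "meanv p i = measure_pmf.expectation p (\<lambda>x. real_of_int (x i))"

definition Dv :: "nat \<Rightarrow> (nat \<Rightarrow> int) pmf \<Rightarrow> (nat \<Rightarrow> real) \<Rightarrow> real" where
  "Dv N p c = measure_pmf.expectation p (\<lambda>x. \<Sum>i<N. (real_of_int (x i) - c i)^2)"

lemma fin_addp: "finite (set_pmf p) \<Longrightarrow> finite (set_pmf q) \<Longrightarrow> finite (set_pmf (addp p q))"
  unfolding addp_def by (auto simp del: set_bind_pmf simp: set_bind_pmf)

lemma int_addp:
  fixes g :: "(nat \<Rightarrow> int) \<Rightarrow> real"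
  assumes "finite (set_pmf p)" "finite (set_pmf q)"
  shows "measure_pmf.expectation (addp p q) g =
     measure_pmf.expectation p (\<lambda>x. measure_pmf.expectation q (\<lambda>y. g (\<lambda>i. x i + y i)))"
  unfolding addp_def
  apply (subst int_bind)
    apply (use assms in \<open>auto\<close>)
  apply (subst int_bind)
    apply (use assms in \<open>auto\<close>)
  done

lemma mean_addp:
  assumes "finite (set_pmf p)" "finite (set_pmf q)"
  shows "meanv (addp p q) i = meanv p i + meanv q i"
proof -
  have "meanv (addp p q) i = measure_pmf.expectation p (\<lambda>x. measure_pmf.expectation q (\<lambda>y. real_of_int (x i) + real_of_int (y i)))"
    unfolding meanv_def by (simp add: int_addp[OF assms])
  also have "\<dots> = measure_pmf.expectation p (\<lambda>x. real_of_int (x i) + meanv q i)"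
  proof (rule Bochner_Integration.integral_cong[OF refl])
    fix x
    show "measure_pmf.expectation q (\<lambda>y. real_of_int (x i) + real_of_int (y i)) = real_of_int (x i) + meanv q i"
      unfolding meanv_def
      by (subst Bochner_Integration.integral_add) (auto intro!: integrable_measure_pmf_finite assms)
  qed
  also have "\<dots> = meanv p i + meanv q i"
    unfolding meanv_def
    by (subst Bochner_Integration.integral_add) (auto intro!: integrable_measure_pmf_finite assms)
  finally show ?thesis .
qed

lemma D_addp:
  assumes fp: "finite (set_pmf p)" and fq: "finite (set_pmf q)" and b: "\<And>i. i < N \<Longrightarrow> meanv q i = b i"
  shows "Dv N (addp p q) (\<lambda>i. a i + b i) = Dv N p a + Dv N q b"
proof -
  have I: "\<And>f :: (nat \<Rightarrow> int) \<Rightarrow> real. integrable (measure_pmf q) f"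
    by (rule integrable_measure_pmf_finite[OF fq])
  have Ip: "\<And>f :: (nat \<Rightarrow> int) \<Rightarrow> real. integrable (measure_pmf p) f"
    by (rule integrable_measure_pmf_finite[OF fp])
  have inner: "measure_pmf.expectation q (\<lambda>y. \<Sum>i<N. (real_of_int (x i + y i) - (a i + b i))^2)
      = (\<Sum>i<N. (real_of_int (x i) - a i)^2) + Dv N q b" for x
  proof -
    have eq: "(\<lambda>y. \<Sum>i<N. (real_of_int (x i + y i) - (a i + b i))^2) =
       (\<lambda>y. (\<Sum>i<N. (real_of_int (x i) - a i)^2) + (\<Sum>i<N. (real_of_int (y i) - b i)^2)
          + (\<Sum>i<N. 2 * (real_of_int (x i) - a i) * (real_of_int (y i) - b i)))"
      by (rule ext) (simp add: sum.distrib[symmetric] power2_eq_square algebra_simps)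
    have z: "measure_pmf.expectation q (\<lambda>y. \<Sum>i<N. 2 * (real_of_int (x i) - a i) * (real_of_int (y i) - b i)) = 0"
    proof -
      have "measure_pmf.expectation q (\<lambda>y. \<Sum>i<N. 2 * (real_of_int (x i) - a i) * (real_of_int (y i) - b i))
          = (\<Sum>i<N. measure_pmf.expectation q (\<lambda>y. 2 * (real_of_int (x i) - a i) * (real_of_int (y i) - b i)))"
        by (rule Bochner_Integration.integral_sum) (simp add: I)
      also have "\<dots> = (\<Sum>i<N. 2 * (real_of_int (x i) - a i) * (meanv q i - b i))"
        unfolding meanv_def
        by (intro sum.cong refl, subst mult.assoc, subst Bochner_Integration.integral_mult_right, simp add: I, subst Bochner_Integration.integral_diff) (simp_all add: I)
      also have "\<dots> = 0" using b by simp
      finally show ?thesis .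
    qed
    show ?thesis unfolding eq Dv_def
      apply (subst Bochner_Integration.integral_add)
        apply (rule I)
       apply (rule I)
      apply (subst Bochner_Integration.integral_add)
        apply (rule I)
       apply (rule I)
      apply (simp only: z)
      apply simp
      done
  qed
  show ?thesis
    unfolding Dv_def
    apply (subst int_addp[OF fp fq])
    apply (simp only: inner)
    apply (subst Bochner_Integration.integral_add)
      apply (simp_all add: Ip Dv_def)
    done
qed


lemma fin_round: "finite (set_pmf (round_pmf Q))"
  unfolding round_pmf_def by (simp add: finite_subset[of _ UNIV])

lemma int_round:
  fixes g :: "int \<Rightarrow> real"
  shows "measure_pmf.expectation (round_pmf Q) g =
     g (\<lfloor>Q\<rfloor> + 1) * (Q - of_int \<lfloor>Q\<rfloor>) + g \<lfloor>Q\<rfloor> * (1 - (Q - of_int \<lfloor>Q\<rfloor>))"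
proof -
  have "0 \<le> Q - of_int \<lfloor>Q\<rfloor>" "Q - of_int \<lfloor>Q\<rfloor> \<le> 1" using real_of_int_floor_add_one_ge[of Q] by (simp, linarith)
  then show ?thesis unfolding round_pmf_def by simp
qed

lemma round_mean: "measure_pmf.expectation (round_pmf Q) (\<lambda>n. real_of_int n) = Q"
  by (simp add: int_round algebra_simps)

lemma round_sq: "measure_pmf.expectation (round_pmf Q) (\<lambda>n. (real_of_int n)^2) \<le> Q^2 + 1/4"
proof -
  define f where "f = Q - of_int \<lfloor>Q\<rfloor>"
  have Q: "Q = of_int \<lfloor>Q\<rfloor> + f" unfolding f_def by simp
  have "measure_pmf.expectation (round_pmf Q) (\<lambda>n. (real_of_int n)^2)
     = (of_int \<lfloor>Q\<rfloor> + f)^2 + f - f^2"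
    unfolding int_round f_def[symmetric] by (simp add: power2_eq_square algebra_simps)
  also have "\<dots> \<le> Q^2 + 1/4" unfolding Q[symmetric]
    using sum_squares_ge_zero[of "f - 1/2" 0] by (simp add: power2_eq_square algebra_simps)
  finally show ?thesis .
qed

lemma uv_real[simp]: "real_of_int (unit_vec l c i) = (if i = l then real_of_int c else 0)"
  by (simp add: unit_vec_def)

lemma uv_sq: "l < N \<Longrightarrow> (\<Sum>i<N. (real_of_int (unit_vec l c i))^2) = (real_of_int c)^2"
proof -
  assume "l < N"
  have "(\<Sum>i<N. (real_of_int (unit_vec l c i))^2) = (\<Sum>i<N. if i = l then (real_of_int c)^2 else 0)"
    by (rule sum.cong) auto
  then show ?thesis using \<open>l < N\<close> by simp
qed

lemma Dv_cong: "(\<And>i. i < N \<Longrightarrow> c i = c' i) \<Longrightarrow> Dv N p c = Dv N p c'"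
  unfolding Dv_def by (intro Bochner_Integration.integral_cong refl sum.cong) auto

lemma Dv_mean:
  assumes fp: "finite (set_pmf p)"
  shows "Dv N p (meanv p) = measure_pmf.expectation p (\<lambda>x. \<Sum>i<N. (real_of_int (x i))^2) - (\<Sum>i<N. (meanv p i)^2)"
proof -
  have I: "\<And>f :: (nat \<Rightarrow> int) \<Rightarrow> real. integrable (measure_pmf p) f"
    by (rule integrable_measure_pmf_finite[OF fp])
  have eq: "(\<lambda>x. \<Sum>i<N. (real_of_int (x i) - meanv p i)^2) = 
     (\<lambda>x. (\<Sum>i<N. (real_of_int (x i))^2) - (\<Sum>i<N. 2 * meanv p i * real_of_int (x i)) + (\<Sum>i<N. (meanv p i)^2))"
    by (rule ext) (simp add: sum.distrib[symmetric] sum_subtractf[symmetric] power2_eq_square algebra_simps)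
  have m: "measure_pmf.expectation p (\<lambda>x. \<Sum>i<N. 2 * meanv p i * real_of_int (x i)) = (\<Sum>i<N. 2 * (meanv p i)^2)"
    apply (subst Bochner_Integration.integral_sum)
     apply (rule I)
    apply (rule sum.cong[OF refl])
    apply (subst Bochner_Integration.integral_mult_right)
     apply (rule I)
    apply (simp add: meanv_def power2_eq_square)
    done
  show ?thesis unfolding Dv_def eq
    apply (subst Bochner_Integration.integral_add)
      apply (rule I)
     apply (rule I)
    apply (subst Bochner_Integration.integral_diff)
      apply (rule I)
     apply (rule I)
    apply (simp only: m)
    apply (simp add: sum_distrib_left[symmetric])
    done
qed


lemma sgn_abs: "s \<in> {-1, 1} \<Longrightarrow> real_of_int (sgn_int (x * of_int s)) * \<bar>x\<bar> = of_int s * x"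
  by (auto simp: sgn_int_def mult_less_0_iff zero_less_mult_iff)

lemma sgn_sq: "s \<in> {-1, 1} \<Longrightarrow> x \<noteq> 0 \<Longrightarrow> (real_of_int (sgn_int (x * of_int s)))^2 = 1"
  by (auto simp: sgn_int_def mult_less_0_iff zero_less_mult_iff)

lemma fin_diag: "finite (set_pmf (diag_pmf A k s))"
  unfolding diag_pmf_def by (simp add: fin_round)

lemma mean_diag:
  assumes s: "s \<in> {-1, 1}"
  shows "meanv (diag_pmf A k s) i = (if i = k then of_int s * A k k else 0)"
proof (cases "i = k")
  case True
  then show ?thesis
  proof -
    have "meanv (diag_pmf A k s) i = measure_pmf.expectation (round_pmf \<bar>A k k\<bar>) (\<lambda>n. real_of_int n * real_of_int (sgn_int (A k k * of_int s)))"
      unfolding meanv_def diag_pmf_def using True by simp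
    also have "\<dots> = \<bar>A k k\<bar> * real_of_int (sgn_int (A k k * of_int s))"
      by (simp add: Bochner_Integration.integral_mult_left_zero round_mean)
    also have "\<dots> = of_int s * A k k" using sgn_abs[OF s, of "A k k"] by (simp add: mult.commute)
    finally show ?thesis using True by simp
  qed
next
  case False
  then show ?thesis unfolding meanv_def diag_pmf_def by simp
qed

lemma D_diag:
  assumes s: "s \<in> {-1, 1}" and k: "k < N" and nz: "A k k \<noteq> 0"
  shows "Dv N (diag_pmf A k s) (meanv (diag_pmf A k s)) \<le> 1/4"
proof -
  define \<sigma> where "\<sigma> = real_of_int (sgn_int (A k k * of_int s))"
  have \<sigma>: "\<sigma>^2 = 1" unfolding \<sigma>_def using sgn_sq[OF s nz] .
  have e: "measure_pmf.expectation (diag_pmf A k s) (\<lambda>x. \<Sum>i<N. (real_of_int (x i))^2)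
     = measure_pmf.expectation (round_pmf \<bar>A k k\<bar>) (\<lambda>n. (real_of_int n)^2)"
    unfolding diag_pmf_def using k by (simp del: uv_real add: uv_sq power_mult_distrib \<sigma>[unfolded \<sigma>_def])
  have m: "(\<Sum>i<N. (meanv (diag_pmf A k s) i)^2) = (A k k)^2"
  proof -
    have "(\<Sum>i<N. (meanv (diag_pmf A k s) i)^2) = (\<Sum>i<N. if i = k then (A k k)^2 else 0)"
      by (rule sum.cong[OF refl]) (use s in \<open>auto simp: mean_diag[OF s] power_mult_distrib\<close>)
    then show ?thesis using k by simp
  qed
  show ?thesis unfolding Dv_mean[OF fin_diag] e m
    using round_sq[of "\<bar>A k k\<bar>"] by simp
qed


lemma fin_S: "finite (offdiag_support N A k)"
  by (rule finite_subset[of _ "{..<N}"]) (auto simp: offdiag_support_def)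

lemma S_lt: "l \<in> offdiag_support N A k \<Longrightarrow> l < N"
  by (auto simp: offdiag_support_def)

lemma fin_spawn: "offdiag_support N A k \<noteq> {} \<Longrightarrow> finite (set_pmf (spawn_pmf N A k s))"
  unfolding spawn_pmf_def using fin_S[of N A k]
  by (simp del: set_bind_pmf add: set_bind_pmf finite_UN_I fin_round)

lemma int_spawn:
  fixes g :: "(nat \<Rightarrow> int) \<Rightarrow> real"
  assumes ne: "offdiag_support N A k \<noteq> {}"
  shows "measure_pmf.expectation (spawn_pmf N A k s) g =
    (\<Sum>l\<in>offdiag_support N A k. measure_pmf.expectation (round_pmf (real (card (offdiag_support N A k)) * \<bar>A l k\<bar>))
        (\<lambda>n. g (unit_vec l (n * sgn_int (A l k * of_int s))))) / real (card (offdiag_support N A k))"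
  unfolding spawn_pmf_def
  apply (subst int_bind)
    apply (simp add: fin_S ne)
   apply (simp add: fin_round)
  apply (simp add: integral_pmf_of_set[OF ne fin_S])
  done

lemma mean_spawn:
  assumes ne: "offdiag_support N A k \<noteq> {}" and s: "s \<in> {-1, 1}"
  shows "meanv (spawn_pmf N A k s) i = (if i \<in> offdiag_support N A k then of_int s * A i k else 0)"
proof -
  define S where "S = offdiag_support N A k"
  define m where "m = real (card S)"
  have m: "m > 0" unfolding m_def S_def using ne fin_S by (simp add: card_gt_0_iff)
  have inner: "measure_pmf.expectation (round_pmf (m * \<bar>A l k\<bar>))
        (\<lambda>n. real_of_int (unit_vec l (n * sgn_int (A l k * of_int s)) i)) = (if i = l then m * (of_int s * A l k) else 0)" for l
  proof (cases "i = l")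
    case True
    have "measure_pmf.expectation (round_pmf (m * \<bar>A l k\<bar>))
        (\<lambda>n. real_of_int (unit_vec l (n * sgn_int (A l k * of_int s)) i)) = 
        measure_pmf.expectation (round_pmf (m * \<bar>A l k\<bar>)) (\<lambda>n. real_of_int n * real_of_int (sgn_int (A l k * of_int s)))"
      using True by simp
    also have "\<dots> = m * (\<bar>A l k\<bar> * real_of_int (sgn_int (A l k * of_int s)))"
      by (simp add: Bochner_Integration.integral_mult_left_zero round_mean)
    also have "\<dots> = m * (of_int s * A l k)" using sgn_abs[OF s, of "A l k"] by (simp add: mult.commute)
    finally show ?thesis using True by simp
  qed simp
  have "meanv (spawn_pmf N A k s) i = (\<Sum>l\<in>S. (if i = l then m * (of_int s * A l k) else 0)) / m"
    unfolding meanv_def int_spawn[OF ne] S_def[symmetric] m_def[symmetric] inner ..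
  also have "\<dots> = (if i \<in> S then of_int s * A i k else 0)"
    using m fin_S[of N A k] unfolding S_def by simp
  finally show ?thesis unfolding S_def .
qed

lemma D_spawn:
  assumes ne: "offdiag_support N A k \<noteq> {}" and s: "s \<in> {-1, 1}"
  shows "Dv N (spawn_pmf N A k s) (meanv (spawn_pmf N A k s)) \<le>
     (real (card (offdiag_support N A k)) - 1) * (\<Sum>j\<in>offdiag_support N A k. (A j k)^2) + 1/4"
proof -
  define S where "S = offdiag_support N A k"
  define m where "m = real (card S)"
  define T where "T = (\<Sum>j\<in>S. (A j k)^2)"
  have finS: "finite S" unfolding S_def by (rule fin_S)
  have m: "m > 0" unfolding m_def S_def using ne fin_S by (simp add: card_gt_0_iff)
  have sq: "measure_pmf.expectation (round_pmf (m * \<bar>A l k\<bar>))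
        (\<lambda>n. \<Sum>i<N. (real_of_int (unit_vec l (n * sgn_int (A l k * of_int s)) i))^2) \<le> m^2 * (A l k)^2 + 1/4"
    if l: "l \<in> S" for l
  proof -
    have nz: "A l k \<noteq> 0" using l unfolding S_def offdiag_support_def by auto
    have "measure_pmf.expectation (round_pmf (m * \<bar>A l k\<bar>))
        (\<lambda>n. \<Sum>i<N. (real_of_int (unit_vec l (n * sgn_int (A l k * of_int s)) i))^2)
        = measure_pmf.expectation (round_pmf (m * \<bar>A l k\<bar>)) (\<lambda>n. (real_of_int n)^2)"
      using S_lt[OF l[unfolded S_def]] sgn_sq[OF s nz]
      by (simp del: uv_real add: uv_sq power_mult_distrib)
    also have "\<dots> \<le> (m * \<bar>A l k\<bar>)^2 + 1/4" by (rule round_sq)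
    finally show ?thesis by (simp add: power_mult_distrib)
  qed
  have E: "measure_pmf.expectation (spawn_pmf N A k s) (\<lambda>x. \<Sum>i<N. (real_of_int (x i))^2) \<le> m * T + 1/4"
  proof -
    have "measure_pmf.expectation (spawn_pmf N A k s) (\<lambda>x. \<Sum>i<N. (real_of_int (x i))^2)
       \<le> (\<Sum>l\<in>S. m^2 * (A l k)^2 + 1/4) / m"
      unfolding int_spawn[OF ne] S_def[symmetric] m_def[symmetric]
      using m by (intro divide_right_mono sum_mono sq) auto
    also have "(\<Sum>l\<in>S. m^2 * (A l k)^2 + 1/4) = m^2 * T + m/4"
      by (simp add: sum.distrib sum_distrib_left T_def m_def)
    also have "(m^2 * T + m/4) / m = m * T + 1/4" using m by (simp add: power2_eq_square field_simps)
    finally show ?thesis .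
  qed
  have M: "(\<Sum>i<N. (meanv (spawn_pmf N A k s) i)^2) = T"
  proof -
    have "(\<Sum>i<N. (meanv (spawn_pmf N A k s) i)^2) = (\<Sum>i<N. if i \<in> S then (A i k)^2 else 0)"
      by (rule sum.cong[OF refl]) (use s in \<open>auto simp: mean_spawn[OF ne s] S_def power_mult_distrib\<close>)
    also have "\<dots> = (\<Sum>i\<in>{..<N} \<inter> S. (A i k)^2)" by (rule sum.inter_restrict[symmetric]) simp
    also have "{..<N} \<inter> S = S" using S_lt[of _ N A k] unfolding S_def by auto
    finally show ?thesis unfolding T_def .
  qed
  show ?thesis unfolding Dv_mean[OF fin_spawn[OF ne]] M S_def[symmetric] m_def[symmetric] T_def[symmetric]
    using E by (simp add: algebra_simps)
qed


lemma col_card: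
  assumes k: "k < N" and nz: "A k k \<noteq> 0"
  shows "col_l0 N A k = Suc (card (offdiag_support N A k))"
proof -
  have "{j. j < N \<and> A j k \<noteq> 0} = insert k (offdiag_support N A k)"
    using k nz by (auto simp: offdiag_support_def)
  moreover have "k \<notin> offdiag_support N A k" by (simp add: offdiag_support_def)
  ultimately show ?thesis unfolding col_l0_def using fin_S[of N A k] by simp
qed

lemma T_eq: "offdiag_col_sq_l2 N A k = (\<Sum>j\<in>offdiag_support N A k. (A j k)^2)"
  unfolding offdiag_col_sq_l2_def
  by (rule sum.mono_neutral_right) (auto simp: offdiag_support_def)

lemma particle:
  assumes k: "k < N" and nz: "A k k \<noteq> 0" and c: "col_l0 N A k \<ge> 2" and s: "s \<in> {-1, 1}"
  shows "finite (set_pmf (particle_pmf N A k s))"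
    and "\<And>i. i < N \<Longrightarrow> meanv (particle_pmf N A k s) i = of_int s * A i k"
    and "Dv N (particle_pmf N A k s) (meanv (particle_pmf N A k s)) \<le>
           (real (col_l0 N A k) - 2) * offdiag_col_sq_l2 N A k + 1/2"
proof -
  have pe: "particle_pmf N A k s = addp (spawn_pmf N A k s) (diag_pmf A k s)"
    unfolding particle_pmf_def addp_def ..
  have ne: "offdiag_support N A k \<noteq> {}" using c col_card[of k N A, OF k nz] by auto
  note fs = fin_spawn[OF ne] and fd = fin_diag
  show "finite (set_pmf (particle_pmf N A k s))" unfolding pe by (rule fin_addp[OF fs fd])
  have mean: "meanv (particle_pmf N A k s) i = of_int s * A i k" if i: "i < N" for i
    unfolding pe mean_addp[OF fs fd] mean_spawn[OF ne s] mean_diag[OF s]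
    using i by (auto simp: offdiag_support_def)
  then show "\<And>i. i < N \<Longrightarrow> meanv (particle_pmf N A k s) i = of_int s * A i k" .
  have "Dv N (particle_pmf N A k s) (meanv (particle_pmf N A k s)) =
        Dv N (addp (spawn_pmf N A k s) (diag_pmf A k s)) (\<lambda>i. meanv (spawn_pmf N A k s) i + meanv (diag_pmf A k s) i)"
    unfolding pe by (rule Dv_cong) (simp add: mean_addp[OF fs fd])
  also have "\<dots> = Dv N (spawn_pmf N A k s) (meanv (spawn_pmf N A k s)) + Dv N (diag_pmf A k s) (meanv (diag_pmf A k s))"
    by (rule D_addp[OF fs fd]) simp
  also have "\<dots> \<le> (real (card (offdiag_support N A k)) - 1) * (\<Sum>j\<in>offdiag_support N A k. (A j k)^2) + 1/4 + 1/4"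
    by (intro add_mono D_spawn[OF ne s] D_diag[of s k N A, OF s k nz])
  also have "\<dots> = (real (col_l0 N A k) - 2) * offdiag_col_sq_l2 N A k + 1/2"
    unfolding T_eq col_card[of k N A, OF k nz] by simp
  finally show "Dv N (particle_pmf N A k s) (meanv (particle_pmf N A k s)) \<le>
           (real (col_l0 N A k) - 2) * offdiag_col_sq_l2 N A k + 1/2" .
qed


lemma sum_indep_cons: "sum_indep_pmf (p # ps) = addp p (sum_indep_pmf ps)"
  by (simp add: addp_def)

lemma list_sum:
  assumes "\<forall>p\<in>set ps. finite (set_pmf p)"
  shows "finite (set_pmf (sum_indep_pmf ps)) \<and> (\<forall>i<N. meanv (sum_indep_pmf ps) i = (\<Sum>p\<leftarrow>ps. meanv p i))
     \<and> Dv N (sum_indep_pmf ps) (\<lambda>i. \<Sum>p\<leftarrow>ps. meanv p i) = (\<Sum>p\<leftarrow>ps. Dv N p (meanv p))"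
  using assms
proof (induction ps)
  case Nil
  then show ?case by (simp add: meanv_def Dv_def)
next
  case (Cons p ps)
  then have fp: "finite (set_pmf p)" and IH: "finite (set_pmf (sum_indep_pmf ps))"
      "\<forall>i<N. meanv (sum_indep_pmf ps) i = (\<Sum>p\<leftarrow>ps. meanv p i)"
      "Dv N (sum_indep_pmf ps) (\<lambda>i. \<Sum>p\<leftarrow>ps. meanv p i) = (\<Sum>p\<leftarrow>ps. Dv N p (meanv p))" by auto
  have "Dv N (sum_indep_pmf (p # ps)) (\<lambda>i. \<Sum>p\<leftarrow>p # ps. meanv p i)
      = Dv N (addp p (sum_indep_pmf ps)) (\<lambda>i. meanv p i + (\<Sum>p\<leftarrow>ps. meanv p i))"
    unfolding sum_indep_cons by simp
  also have "\<dots> = Dv N p (meanv p) + Dv N (sum_indep_pmf ps) (\<lambda>i. \<Sum>p\<leftarrow>ps. meanv p i)"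
    by (rule D_addp[OF fp IH(1)]) (use IH(2) in auto)
  finally show ?case using IH fp by (simp del: sum_indep_pmf.simps add: sum_indep_cons fin_addp mean_addp)
qed

lemma sum_particles:
  fixes g :: "nat \<times> int \<Rightarrow> real"
  shows "(\<Sum>x\<leftarrow>particles N v. g x) = (\<Sum>k<N. real (nat \<bar>v k\<bar>) * g (k, sgn (v k)))"
  by (induction N) (simp_all add: particles_def sum_list_replicate)

lemma set_particles: "x \<in> set (particles N v) \<Longrightarrow> fst x < N \<and> snd x = sgn (v (fst x)) \<and> v (fst x) \<noteq> 0"
  by (auto simp: particles_def)

lemma nat_abs_sgn: "real (nat \<bar>z\<bar>) * real_of_int (sgn z) = real_of_int z"
  by (cases "z \<ge> 0") (auto simp: sgn_if)

lemma nat_abs: "real (nat \<bar>z\<bar>) = \<bar>real_of_int z\<bar>"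
  by simp


theorem mainTheorem4:
  fixes N :: nat and A :: "nat \<Rightarrow> nat \<Rightarrow> real" and v :: "nat \<Rightarrow> int"
  assumes N_pos: "0 < N"
    and sym: "\<And>i j. i < N \<Longrightarrow> j < N \<Longrightarrow> A i j = A j i"
    and diag: "\<And>k. k < N \<Longrightarrow> A k k \<noteq> 0"
    and cols: "\<And>k. k < N \<Longrightarrow> col_l0 N A k \<ge> 2"
  shows "measure_pmf.expectation (fciqmc_step N A v)
           (\<lambda>w. sq_l2_norm N (\<lambda>i. real_of_int (w i) - matvec N A v i))
         \<le> (Max ((\<lambda>k. (real (col_l0 N A k) - 2) * offdiag_col_sq_l2 N A k) ` {..<N}) + 1/2)
             * (l1_norm N v)^2 / l1_norm N v"
proof -
  define C where "C = Max ((\<lambda>k. (real (col_l0 N A k) - 2) * offdiag_col_sq_l2 N A k) ` {..<N}) + 1/2"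
  define f where "f = (\<lambda>x :: nat \<times> int. particle_pmf N A (fst x) (snd x))"
  define P where "P = particles N v"
  have sv: "snd x \<in> {-1, 1}" if "x \<in> set P" for x
    using set_particles[OF that[unfolded P_def]] by (auto simp: sgn_if)
  have fx: "fst x < N" if "x \<in> set P" for x using set_particles[OF that[unfolded P_def]] by auto
  have part1: "finite (set_pmf (f x))" if x: "x \<in> set P" for x
    unfolding f_def by (rule particle(1)[OF fx[OF x] diag[OF fx[OF x]] cols[OF fx[OF x]] sv[OF x]])
  have part2: "meanv (f x) i = of_int (snd x) * A i (fst x)" if x: "x \<in> set P" and i: "i < N" for x i
    unfolding f_def by (rule particle(2)[OF fx[OF x] diag[OF fx[OF x]] cols[OF fx[OF x]] sv[OF x] i])
  have part3: "Dv N (f x) (meanv (f x)) \<le> (real (col_l0 N A (fst x)) - 2) * offdiag_col_sq_l2 N A (fst x) + 1/2"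
    if x: "x \<in> set P" for x
    unfolding f_def by (rule particle(3)[OF fx[OF x] diag[OF fx[OF x]] cols[OF fx[OF x]] sv[OF x]])
  have step: "fciqmc_step N A v = sum_indep_pmf (map f P)"
    unfolding fciqmc_step_def f_def P_def by (simp add: case_prod_unfold)
  have fin: "\<forall>p\<in>set (map f P). finite (set_pmf p)" using part1 by auto
  note L = list_sum[OF fin, of N]
  have center: "matvec N A v i = (\<Sum>p\<leftarrow>map f P. meanv p i)" if i: "i < N" for i
  proof -
    have "(\<Sum>p\<leftarrow>map f P. meanv p i) = (\<Sum>x\<leftarrow>P. of_int (snd x) * A i (fst x))"
      unfolding map_map o_def
      by (rule arg_cong[where f=sum_list], rule map_cong[OF refl]) (use part2 i in simp)
    also have "\<dots> = (\<Sum>k<N. real (nat \<bar>v k\<bar>) * (of_int (sgn (v k)) * A i k))"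
      unfolding P_def using sum_particles[of "\<lambda>x. real_of_int (snd x) * A i (fst x)" N v] by simp
    also have "\<dots> = matvec N A v i"
      unfolding matvec_def by (rule sum.cong[OF refl]) (metis mult.assoc mult.commute nat_abs_sgn)
    finally show ?thesis ..
  qed
  have "measure_pmf.expectation (fciqmc_step N A v)
           (\<lambda>w. sq_l2_norm N (\<lambda>i. real_of_int (w i) - matvec N A v i)) =
        Dv N (sum_indep_pmf (map f P)) (matvec N A v)"
    unfolding step Dv_def sq_l2_norm_def ..
  also have "\<dots> = Dv N (sum_indep_pmf (map f P)) (\<lambda>i. \<Sum>p\<leftarrow>map f P. meanv p i)"
    by (rule Dv_cong) (simp add: center)
  also have "\<dots> = (\<Sum>x\<leftarrow>P. Dv N (f x) (meanv (f x)))"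
    using L by (simp add: map_map o_def)
  also have "\<dots> \<le> (\<Sum>x\<leftarrow>P. C)"
  proof (rule sum_list_mono)
    fix x assume x: "x \<in> set P"
    have "(real (col_l0 N A (fst x)) - 2) * offdiag_col_sq_l2 N A (fst x)
       \<le> Max ((\<lambda>k. (real (col_l0 N A k) - 2) * offdiag_col_sq_l2 N A k) ` {..<N})"
      by (rule Max_ge) (use fx[OF x] in auto)
    then show "Dv N (f x) (meanv (f x)) \<le> C"
      using part3[OF x] unfolding C_def by linarith
  qed
  also have "\<dots> = l1_norm N v * C"
    unfolding P_def sum_particles l1_norm_def by (simp add: sum_distrib_right)
  also have "\<dots> = C * (l1_norm N v)^2 / l1_norm N v"
    by (cases "l1_norm N v = 0") (simp_all add: power2_eq_square)
  finally show ?thesis unfolding C_def .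
qed

end
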